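(* Let $K$ and $L$ be $n$-element finite sets, let $U$ be the real $n^2$-dimensional manifold of unitary matrices $(u_{kl})_{k\in K,l\in L}$, and let $U_0\subset U$ be the open subset of unitary matrices all of whose entries are nonzero. Let $B$ be the real affine space of real matrices $(p_{kl})_{k\in K,l\in L}$ with $\sum_{k}p_{kl}=1$ for all $l$ and $\sum_lp_{kl}=1$ for all $k$, and let $\mu:U\to B$, $\mu((u_{kl}))=(|u_{kl}|^2)$. Then for every $u\in U_0$, the (real) dimension of the kernel of the tangent map $\mu_{*u}:T_uU\to T_{\mu(u)}B$ equals the multiplicity of $1$ in the spectrum of the Berezin transform $I_u$.
   Context: For a finite set $J$, $F(J)$ denotes the space of complex-valued functions on $J$; $M=K\times L$. For $u\in U_0$ the Berezin transform $I_u:F(M)\to F(M)$ is the complex linear operator $(I_uf)_{kl}=\sum_{k'\in K,l'\in L}\frac{u_{kl'}u_{k'l}}{u_{kl}u_{k'l'}}f_{k'l'}|u_{k'l'}|^2$ (equivalently $I_u=C_u^{-1}D_u$, where $C_uf$, $D_uf$ are the operators on $F(K)$ with matrices $\sum_l u_{kl}f_{kl}\bar u_{k'l}$ and $\sum_l u_{kl}f_{k'l}\bar u_{k'l}$); $I_u$ is unitary, hence diagonalizable, and the multiplicity of $1$ is the complex dimension of its $1$-eigenspace. *)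

theory Defs
  imports "HOL-Analysis.Analysis"
begin

text \<open>Complex matrices indexed by K x L are modelled as complex ^ 'l ^ 'k
  (K, L finite index types); F(M) is the same space.\<close>

definition unitary_mat :: "complex ^ 'l ^ 'k \<Rightarrow> bool" where
  "unitary_mat u \<longleftrightarrow>
     (\<forall>k k'. (\<Sum>l\<in>UNIV. u$k$l * cnj (u$k'$l)) = (if k = k' then 1 else 0)) \<and>
     (\<forall>l l'. (\<Sum>k\<in>UNIV. cnj (u$k$l) * u$k$l') = (if l = l' then 1 else 0))"

definition U0 :: "(complex ^ 'l ^ 'k) set" where
  "U0 = {u. unitary_mat u \<and> (\<forall>k l. u$k$l \<noteq> 0)}"

text \<open>Tangent space of the unitary group at u: kernel of the differential of
  Z \<mapsto> Z Z^* at u, i.e. X u^* + u X^* = 0.\<close>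
definition tangent_U :: "complex ^ 'l ^ 'k \<Rightarrow> (complex ^ 'l ^ 'k) set" where
  "tangent_U u = {X. \<forall>k k'. (\<Sum>l\<in>UNIV. X$k$l * cnj (u$k'$l) + u$k$l * cnj (X$k'$l)) = 0}"

text \<open>The moment map mu(u) = (|u_kl|^2), viewed in the ambient space of real matrices
  containing the affine space B.\<close>
definition mu :: "complex ^ 'l ^ 'k \<Rightarrow> real ^ 'l ^ 'k" where
  "mu u = (\<chi> k l. (cmod (u$k$l))\<^sup>2)"

definition berezin :: "complex ^ 'l ^ 'k \<Rightarrow> complex ^ 'l ^ 'k \<Rightarrow> complex ^ 'l ^ 'k" where
  "berezin u f = (\<chi> k l. \<Sum>k'\<in>UNIV. \<Sum>l'\<in>UNIV.
      (u$k$l' * u$k'$l) / (u$k$l * u$k'$l') * f$k'$l' * complex_of_real ((cmod (u$k'$l'))\<^sup>2))"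

definition cscale :: "complex \<Rightarrow> complex ^ 'l ^ 'k \<Rightarrow> complex ^ 'l ^ 'k" where
  "cscale c f = (\<chi> k l. c * f$k$l)"

definition cdim :: "(complex ^ 'l ^ 'k) set \<Rightarrow> nat" where
  "cdim S = vector_space.dim cscale S"

text \<open>Multiplicity of the eigenvalue 1 of the (diagonalizable) Berezin transform:
  complex dimension of its 1-eigenspace.\<close>
definition mult_one :: "complex ^ 'l ^ 'k \<Rightarrow> nat" where
  "mult_one u = cdim {f. berezin u f = f}"

end

theory Submission
  imports Defs
begin

lemma cnorm_sq: "(complex_of_real (cmod z))^2 = z * cnj z"
  using complex_norm_square[of z] by simp

lemma term_eq:
  fixes a b c d x :: complex
  assumes "b \<noteq> 0" "c \<noteq> 0"
  shows "(a * d) / (c * b) * x * complex_of_real ((cmod b)\<^sup>2) = a * x * cnj b * d / c"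
proof -
  have "complex_of_real ((cmod b)\<^sup>2) = b * cnj b" by (rule complex_norm_square)
  then show ?thesis using assms by (simp add: field_simps)
qed

lemma rows_cancel:
  fixes u :: "complex ^ 'l ^ 'k"
  assumes "unitary_mat u"
  shows "(\<forall>k l. (\<Sum>k'\<in>UNIV. M k k' * u$k'$l) = 0) \<longleftrightarrow> (\<forall>k k'. M k k' = 0)"
proof
  assume H: "\<forall>k l. (\<Sum>k'\<in>UNIV. M k k' * u$k'$l) = 0"
  show "\<forall>k k'. M k k' = 0"
  proof (intro allI)
    fix k k''
    have "0 = (\<Sum>l\<in>UNIV. (\<Sum>k'\<in>UNIV. M k k' * u$k'$l) * cnj (u$k''$l))"
      using H by simp
    also have "\<dots> = (\<Sum>k'\<in>UNIV. M k k' * (\<Sum>l\<in>UNIV. u$k'$l * cnj (u$k''$l)))"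
    proof -
      have "(\<Sum>l\<in>UNIV. (\<Sum>k'\<in>UNIV. M k k' * u$k'$l) * cnj (u$k''$l))
          = (\<Sum>l\<in>UNIV. \<Sum>k'\<in>UNIV. M k k' * (u$k'$l * cnj (u$k''$l)))"
        by (simp add: sum_distrib_right mult.assoc)
      also have "\<dots> = (\<Sum>k'\<in>UNIV. \<Sum>l\<in>UNIV. M k k' * (u$k'$l * cnj (u$k''$l)))"
        by (rule sum.swap)
      also have "\<dots> = (\<Sum>k'\<in>UNIV. M k k' * (\<Sum>l\<in>UNIV. u$k'$l * cnj (u$k''$l)))"
        by (simp add: sum_distrib_left)
      finally show ?thesis .
    qed
    also have "\<dots> = (\<Sum>k'\<in>UNIV. M k k' * (if k' = k'' then 1 else 0))"
      using assms unfolding unitary_mat_def by simp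
    also have "\<dots> = M k k''" by (simp add: if_distrib cong: if_cong)
    finally show "M k k'' = 0" by simp
  qed
qed simp

lemma berezin_iff:
  fixes u :: "complex ^ 'l ^ 'k"
  assumes U: "unitary_mat u" and nz: "\<forall>k l. u$k$l \<noteq> 0"
  shows "berezin u f = f \<longleftrightarrow>
     (\<forall>k k'. (\<Sum>l\<in>UNIV. u$k$l * cnj (u$k'$l) * (f$k$l - f$k'$l)) = 0)"
proof -
  define D where "D k k' = (\<Sum>l'\<in>UNIV. u$k$l' * f$k'$l' * cnj (u$k'$l'))" for k k'
  define C where "C k k' = (\<Sum>l'\<in>UNIV. u$k$l' * f$k$l' * cnj (u$k'$l'))" for k k'
  have B: "berezin u f $k$l = (\<Sum>k'\<in>UNIV. D k k' * u$k'$l) / u$k$l" for k l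
  proof -
    have "berezin u f $k$l = (\<Sum>k'\<in>UNIV. \<Sum>l'\<in>UNIV. (u$k$l' * u$k'$l) / (u$k$l * u$k'$l') * f$k'$l' * complex_of_real ((cmod (u$k'$l'))\<^sup>2))"
      unfolding berezin_def by simp
    also have "\<dots> = (\<Sum>k'\<in>UNIV. \<Sum>l'\<in>UNIV. (u$k$l' * f$k'$l' * cnj (u$k'$l') * u$k'$l) / u$k$l)"
      by (intro sum.cong refl term_eq) (use nz in auto)
    also have "\<dots> = (\<Sum>k'\<in>UNIV. D k k' * u$k'$l) / u$k$l"
      by (simp add: D_def sum_divide_distrib sum_distrib_right)
    finally show ?thesis .
  qed
  have F: "f $k$l = (\<Sum>k'\<in>UNIV. C k k' * u$k'$l) / u$k$l" for k l
  proof -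
    have "(\<Sum>k'\<in>UNIV. C k k' * u$k'$l) = (\<Sum>l'\<in>UNIV. u$k$l' * f$k$l' * (\<Sum>k'\<in>UNIV. cnj (u$k'$l') * u$k'$l))"
    proof -
      have "(\<Sum>k'\<in>UNIV. C k k' * u$k'$l) = (\<Sum>k'\<in>UNIV. \<Sum>l'\<in>UNIV. u$k$l' * f$k$l' * (cnj (u$k'$l') * u$k'$l))"
        by (simp add: C_def sum_distrib_right mult.assoc)
      also have "\<dots> = (\<Sum>l'\<in>UNIV. \<Sum>k'\<in>UNIV. u$k$l' * f$k$l' * (cnj (u$k'$l') * u$k'$l))"
        by (rule sum.swap)
      also have "\<dots> = (\<Sum>l'\<in>UNIV. u$k$l' * f$k$l' * (\<Sum>k'\<in>UNIV. cnj (u$k'$l') * u$k'$l))"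
        by (simp add: sum_distrib_left)
      finally show ?thesis .
    qed
    also have "\<dots> = (\<Sum>l'\<in>UNIV. u$k$l' * f$k$l' * (if l' = l then 1 else 0))"
      using U unfolding unitary_mat_def by simp
    also have "\<dots> = u$k$l * f$k$l" by (simp add: if_distrib cong: if_cong)
    finally show ?thesis using nz by simp
  qed
  have "berezin u f = f \<longleftrightarrow> (\<forall>k l. (\<Sum>k'\<in>UNIV. D k k' * u$k'$l) = (\<Sum>k'\<in>UNIV. C k k' * u$k'$l))"
  proof -
    have "berezin u f = f \<longleftrightarrow> (\<forall>k l. berezin u f $k$l = f$k$l)" by (simp add: vec_eq_iff)
    moreover have "berezin u f $k$l = f$k$l \<longleftrightarrow> (\<Sum>k'\<in>UNIV. D k k' * u$k'$l) = (\<Sum>k'\<in>UNIV. C k k' * u$k'$l)" for k l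
      using nz by (simp add: B F[of k l])
    ultimately show ?thesis by simp
  qed
  also have "\<dots> \<longleftrightarrow> (\<forall>k l. (\<Sum>k'\<in>UNIV. (C k k' - D k k') * u$k'$l) = 0)"
    by (simp add: left_diff_distrib sum_subtractf) metis
  also have "\<dots> \<longleftrightarrow> (\<forall>k k'. C k k' - D k k' = 0)"
    by (rule rows_cancel[OF U])
  also have "\<dots> \<longleftrightarrow> (\<forall>k k'. (\<Sum>l\<in>UNIV. u$k$l * cnj (u$k'$l) * (f$k$l - f$k'$l)) = 0)"
  proof -
    have "C k k' - D k k' = (\<Sum>l\<in>UNIV. u$k$l * cnj (u$k'$l) * (f$k$l - f$k'$l))" for k k'
      unfolding C_def D_def sum_subtractf[symmetric] by (intro sum.cong refl) (simp add: algebra_simps)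
    then show ?thesis by simp
  qed
  finally show ?thesis .
qed

lemma nth2_deriv: "((\<lambda>x::'a::real_normed_vector^'l^'k. x$k$l) has_derivative (\<lambda>h. h$k$l)) F"
proof -
  have "bounded_linear (\<lambda>x::'a^'l^'k. x$k$l)"
    using bounded_linear_compose[OF bounded_linear_vec_nth[of l] bounded_linear_vec_nth[of k]] by (simp add: o_def)
  then show ?thesis by (rule bounded_linear.has_derivative[OF _ has_derivative_ident])
qed

lemma axis2_sum: "(\<Sum>k\<in>UNIV. \<Sum>l\<in>UNIV. c k l *\<^sub>R axis k (axis l (1::real))) $ a $ b = c a b"
proof -
  have "(\<Sum>k\<in>UNIV. \<Sum>l\<in>UNIV. c k l *\<^sub>R axis k (axis l (1::real))) $ a $ b
     = (\<Sum>k\<in>UNIV. (if k = a then (\<Sum>l\<in>UNIV. if l = b then c k l else 0) else 0))"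
    unfolding sum_component by (intro sum.cong refl) (auto simp add: axis_def if_distrib[of "\<lambda>y. c _ _ * y"] cong: if_cong)
  also have "\<dots> = c a b" by simp
  finally show ?thesis .
qed

lemma mu_sum: "mu x = (\<Sum>k\<in>UNIV. \<Sum>l\<in>UNIV. (cmod (x$k$l))\<^sup>2 *\<^sub>R axis k (axis l 1))"
  by (simp only: vec_eq_iff axis2_sum) (simp add: mu_def)

lemma mu_deriv:
  "(mu has_derivative (\<lambda>h. \<Sum>k\<in>UNIV. \<Sum>l\<in>UNIV. (2 * ((u$k$l) \<bullet> (h$k$l))) *\<^sub>R axis k (axis l 1))) (at u)"
proof -
  have sc: "((\<lambda>x. (cmod (x$k$l))\<^sup>2) has_derivative (\<lambda>h. 2 * ((u$k$l) \<bullet> (h$k$l)))) (at u)" for k l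
  proof -
    have "((\<lambda>x. (x$k$l) \<bullet> (x$k$l)) has_derivative (\<lambda>h. (u$k$l) \<bullet> (h$k$l) + (h$k$l) \<bullet> (u$k$l))) (at u)"
      by (rule has_derivative_inner[OF nth2_deriv nth2_deriv])
    then show ?thesis
      by (simp add: power2_norm_eq_inner inner_commute)
  qed
  show ?thesis
    unfolding mu_sum[abs_def]
    by (intro has_derivative_sum has_derivative_scaleR_left sc)
qed

lemma mu_fd: "frechet_derivative mu (at u) X = 0 \<longleftrightarrow> (\<forall>k l. Re (cnj (u$k$l) * X$k$l) = 0)"
proof -
  have fd: "frechet_derivative mu (at u) = (\<lambda>h. \<Sum>k\<in>UNIV. \<Sum>l\<in>UNIV. (2 * ((u$k$l) \<bullet> (h$k$l))) *\<^sub>R axis k (axis l 1))"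
    using mu_deriv by (rule frechet_derivative_at[symmetric])
  have e: "(2 * a + 2 * b = 0) \<longleftrightarrow> (a + b = (0::real))" for a b by linarith
  show ?thesis by (simp only: fd vec_eq_iff axis2_sum) (simp add: inner_complex_def e)
qed

lemma cscale_vs: "vector_space cscale"
  by unfold_locales (simp_all add: cscale_def vec_eq_iff algebra_simps)

definition Pc :: "complex ^ 'l ^ 'k \<Rightarrow> complex ^ 'l ^ 'k \<Rightarrow> bool" where
  "Pc u f \<longleftrightarrow> (\<forall>k k'. (\<Sum>l\<in>UNIV. u$k$l * cnj (u$k'$l) * (f$k$l - f$k'$l)) = 0)"

definition gmap :: "complex ^ 'l ^ 'k \<Rightarrow> complex ^ 'l ^ 'k \<Rightarrow> complex ^ 'l ^ 'k" where
  "gmap u f = (\<chi> k l. \<i> * f$k$l * u$k$l)"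

lemma real_cnj: "Im z = 0 \<Longrightarrow> cnj z = z"
  by (simp add: complex_eq_iff)

lemma tangent_g:
  assumes "\<forall>k l. Im (f$k$l) = 0"
  shows "gmap u f \<in> tangent_U u \<longleftrightarrow> Pc u f"
proof -
  have "(\<Sum>l\<in>UNIV. gmap u f$k$l * cnj (u$k'$l) + u$k$l * cnj (gmap u f$k'$l))
      = \<i> * (\<Sum>l\<in>UNIV. u$k$l * cnj (u$k'$l) * (f$k$l - f$k'$l))" for k k'
    unfolding sum_distrib_left
    by (intro sum.cong refl) (simp add: gmap_def real_cnj assms algebra_simps)
  then show ?thesis unfolding tangent_U_def Pc_def by simp
qed

lemma fd_g:
  assumes "\<forall>k l. Im (f$k$l) = 0"
  shows "frechet_derivative mu (at u) (gmap u f) = 0"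
proof -
  have "Re (cnj (u$k$l) * (\<i> * f$k$l * u$k$l)) = 0" for k l
  proof -
    have "cnj (u$k$l) * (\<i> * f$k$l * u$k$l) = \<i> * (f$k$l * (u$k$l * cnj (u$k$l)))" by (simp add: algebra_simps)
    also have "\<dots> = \<i> * complex_of_real (Re (f$k$l) * (cmod (u$k$l))\<^sup>2)"
    proof -
      have fr: "f$k$l = complex_of_real (Re (f$k$l))" using assms by (simp add: complex_eq_iff)
      show ?thesis by (metis fr complex_norm_square of_real_mult)
    qed
    finally have eq: "cnj (u$k$l) * (\<i> * f$k$l * u$k$l) = \<i> * complex_of_real (Re (f$k$l) * (cmod (u$k$l))\<^sup>2)" .
    show ?thesis unfolding eq by simp
  qed
  then show ?thesis by (simp add: mu_fd gmap_def)
qed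

lemma Ker_eq:
  fixes u :: "complex ^ 'l ^ 'k"
  assumes nz: "\<forall>k l. u$k$l \<noteq> 0"
  shows "{X \<in> tangent_U u. frechet_derivative mu (at u) X = 0} = gmap u ` {f. Pc u f \<and> (\<forall>k l. Im (f$k$l) = 0)}"
proof (intro equalityI subsetI)
  fix X assume X: "X \<in> {X \<in> tangent_U u. frechet_derivative mu (at u) X = 0}"
  define f where "f = (\<chi> k l. - \<i> * X$k$l / u$k$l)"
  have gf: "gmap u f = X" using nz by (simp add: gmap_def f_def vec_eq_iff)
  have re: "Re (cnj (u$k$l) * X$k$l) = 0" for k l using X by (simp add: mu_fd)
  have im: "Im (f$k$l) = 0" for k l
  proof -
    have "- \<i> * X$k$l / u$k$l = - \<i> * (cnj (u$k$l) * X$k$l) / complex_of_real ((cmod (u$k$l))\<^sup>2)"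
      by (subst complex_div_cnj) (simp add: algebra_simps)
    then show ?thesis using re[of k l] by (simp add: f_def)
  qed
  have "Pc u f" using X tangent_g[of f u] im gf by simp
  then show "X \<in> gmap u ` {f. Pc u f \<and> (\<forall>k l. Im (f$k$l) = 0)}"
    using gf im by blast
next
  fix X assume "X \<in> gmap u ` {f. Pc u f \<and> (\<forall>k l. Im (f$k$l) = 0)}"
  then obtain f where "X = gmap u f" "Pc u f" "\<forall>k l. Im (f$k$l) = 0" by blast
  then show "X \<in> {X \<in> tangent_U u. frechet_derivative mu (at u) X = 0}"
    using tangent_g[of f u] fd_g[of f u] by simp
qed

lemma dim_Ker:
  fixes u :: "complex ^ 'l ^ 'k"
  assumes nz: "\<forall>k l. u$k$l \<noteq> 0"
  shows "dim {X \<in> tangent_U u. frechet_derivative mu (at u) X = 0} = dim {f. Pc u f \<and> (\<forall>k l. Im (f$k$l) = 0)}"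
proof -
  have lin: "linear (gmap u)"
    by (rule linearI) (simp_all add: gmap_def vec_eq_iff algebra_simps scaleR_conv_of_real)
  have inj: "inj (gmap u)"
    using nz by (auto simp: inj_on_def gmap_def vec_eq_iff)
  show ?thesis unfolding Ker_eq[OF nz]
    by (rule dim_image_eq[OF lin]) (use inj in \<open>auto simp: inj_on_def\<close>)
qed

lemma E_eq:
  fixes u :: "complex ^ 'l ^ 'k"
  assumes "unitary_mat u" "\<forall>k l. u$k$l \<noteq> 0"
  shows "{f. berezin u f = f} = {f. Pc u f}"
  using berezin_iff[OF assms] by (auto simp: Pc_def)

lemma Pc_conj:
  assumes "Pc u f"
  shows "Pc u (\<chi> k l. cnj (f$k$l))"
  unfolding Pc_def
proof (intro allI)
  fix k k'
  have "(\<Sum>l\<in>UNIV. u$k$l * cnj (u$k'$l) * ((\<chi> k l. cnj (f$k$l))$k$l - (\<chi> k l. cnj (f$k$l))$k'$l))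
     = - cnj (\<Sum>l\<in>UNIV. u$k'$l * cnj (u$k$l) * (f$k'$l - f$k$l))"
    unfolding cnj_sum sum_negf[symmetric] by (intro sum.cong refl) (simp add: algebra_simps)
  also have "\<dots> = 0" using assms by (simp add: Pc_def)
  finally show "(\<Sum>l\<in>UNIV. u$k$l * cnj (u$k'$l) * ((\<chi> k l. cnj (f$k$l))$k$l - (\<chi> k l. cnj (f$k$l))$k'$l)) = 0" .
qed

lemma Pc_lin:
  assumes "Pc u f" "Pc u g"
  shows "Pc u (\<chi> k l. a * f$k$l + b * g$k$l)"
  unfolding Pc_def
proof (intro allI)
  fix k k'
  have "(\<Sum>l\<in>UNIV. u$k$l * cnj (u$k'$l) * ((\<chi> k l. a * f$k$l + b * g$k$l)$k$l - (\<chi> k l. a * f$k$l + b * g$k$l)$k'$l))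
     = a * (\<Sum>l\<in>UNIV. u$k$l * cnj (u$k'$l) * (f$k$l - f$k'$l)) + b * (\<Sum>l\<in>UNIV. u$k$l * cnj (u$k'$l) * (g$k$l - g$k'$l))"
    unfolding sum_distrib_left sum.distrib[symmetric] by (intro sum.cong refl) (simp add: algebra_simps)
  also have "\<dots> = 0" using assms by (simp add: Pc_def)
  finally show "(\<Sum>l\<in>UNIV. u$k$l * cnj (u$k'$l) * ((\<chi> k l. a * f$k$l + b * g$k$l)$k$l - (\<chi> k l. a * f$k$l + b * g$k$l)$k'$l)) = 0" .
qed

lemma Pc_re:
  assumes "Pc u f"
  shows "Pc u (\<chi> k l. complex_of_real (Re (f$k$l)))"
proof -
  have P: "Pc u (\<chi> k l. (1/2) * f$k$l + (1/2) * (\<chi> k l. cnj (f$k$l))$k$l)"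
    by (rule Pc_lin[OF assms Pc_conj[OF assms]])
  have X: "(\<chi> k l. (1/2) * f$k$l + (1/2) * (\<chi> k l. cnj (f$k$l))$k$l) = (\<chi> k l. complex_of_real (Re (f$k$l)))"
    by (simp add: vec_eq_iff complex_eq_iff)
  show ?thesis using P unfolding X .
qed

lemma Pc_im:
  assumes "Pc u f"
  shows "Pc u (\<chi> k l. complex_of_real (Im (f$k$l)))"
proof -
  have P: "Pc u (\<chi> k l. (- \<i>/2) * f$k$l + (\<i>/2) * (\<chi> k l. cnj (f$k$l))$k$l)"
    by (rule Pc_lin[OF assms Pc_conj[OF assms]])
  have X: "(\<chi> k l. (- \<i>/2) * f$k$l + (\<i>/2) * (\<chi> k l. cnj (f$k$l))$k$l) = (\<chi> k l. complex_of_real (Im (f$k$l)))"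
    by (simp add: vec_eq_iff complex_eq_iff)
  show ?thesis using P unfolding X .
qed

lemma real_comb_zero:
  fixes B :: "(complex ^ 'l ^ 'k) set"
  assumes R: "\<forall>v\<in>B. \<forall>k l. Im (v$k$l) = 0" and Z: "(\<Sum>v\<in>B. cscale (w v) v) = 0"
  shows "(\<Sum>v\<in>B. Re (w v) *\<^sub>R v) = 0" "(\<Sum>v\<in>B. Im (w v) *\<^sub>R v) = 0"
proof -
  have z: "(\<Sum>v\<in>B. w v * v$k$l) = 0" for k l
  proof -
    have "(\<Sum>v\<in>B. cscale (w v) v) $k$l = 0" using Z by simp
    then show ?thesis by (simp add: cscale_def)
  qed
  have "(\<Sum>v\<in>B. Re (w v) *\<^sub>R v)$k$l = complex_of_real (Re (\<Sum>v\<in>B. w v * v$k$l))" for k l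
  proof -
    have "(\<Sum>v\<in>B. Re (w v) *\<^sub>R v)$k$l = (\<Sum>v\<in>B. complex_of_real (Re (w v * v$k$l)))"
      unfolding sum_component by (intro sum.cong refl) (use R in \<open>simp add: complex_eq_iff\<close>)
    then show ?thesis by simp
  qed
  then show "(\<Sum>v\<in>B. Re (w v) *\<^sub>R v) = 0" using z by (simp add: vec_eq_iff)
  have "(\<Sum>v\<in>B. Im (w v) *\<^sub>R v)$k$l = complex_of_real (Im (\<Sum>v\<in>B. w v * v$k$l))" for k l
  proof -
    have "(\<Sum>v\<in>B. Im (w v) *\<^sub>R v)$k$l = (\<Sum>v\<in>B. complex_of_real (Im (w v * v$k$l)))"
      unfolding sum_component by (intro sum.cong refl) (use R in \<open>simp add: complex_eq_iff\<close>)
    then show ?thesis by simp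
  qed
  then show "(\<Sum>v\<in>B. Im (w v) *\<^sub>R v) = 0" using z by (simp add: vec_eq_iff)
qed

lemma cdim_E:
  fixes u :: "complex ^ 'l ^ 'k"
  assumes U: "unitary_mat u" and nz: "\<forall>k l. u$k$l \<noteq> 0"
  shows "cdim {f. berezin u f = f} = dim {f. Pc u f \<and> (\<forall>k l. Im (f$k$l) = 0)}"
proof -
  define ER where "ER = {f. Pc u f \<and> (\<forall>k l. Im (f$k$l) = 0)}"
  interpret cv: vector_space cscale by (rule cscale_vs)
  obtain B where B: "B \<subseteq> ER" "independent B" "ER \<subseteq> span B" "card B = dim ER"
    by (rule basis_exists)
  have finB: "finite B" using B(2) by (rule independent_imp_finite)
  have R: "\<forall>v\<in>B. \<forall>k l. Im (v$k$l) = 0" using B(1) by (auto simp: ER_def)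
  have "cv.dim {f. Pc u f} = card B"
  proof (rule cv.dim_unique[of B])
    show "B \<subseteq> {f. Pc u f}" using B(1) by (auto simp: ER_def)
    show "card B = card B" ..
    show "{f. Pc u f} \<subseteq> cv.span B"
    proof
      fix f assume "f \<in> {f. Pc u f}"
      then have Pf: "Pc u f" by simp
      have "(\<chi> k l. complex_of_real (Re (f$k$l))) \<in> ER" using Pc_re[OF Pf] by (simp add: ER_def)
      then have "(\<chi> k l. complex_of_real (Re (f$k$l))) \<in> span B" using B(3) by blast
      then obtain a where a: "(\<chi> k l. complex_of_real (Re (f$k$l))) = (\<Sum>v\<in>B. a v *\<^sub>R v)"
        unfolding span_finite[OF finB] by blast
      have "(\<chi> k l. complex_of_real (Im (f$k$l))) \<in> ER" using Pc_im[OF Pf] by (simp add: ER_def)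
      then have "(\<chi> k l. complex_of_real (Im (f$k$l))) \<in> span B" using B(3) by blast
      then obtain c where c: "(\<chi> k l. complex_of_real (Im (f$k$l))) = (\<Sum>v\<in>B. c v *\<^sub>R v)"
        unfolding span_finite[OF finB] by blast
      have feq: "f = (\<Sum>v\<in>B. cscale (complex_of_real (a v) + \<i> * complex_of_real (c v)) v)"
      proof (subst vec_eq_iff, intro allI, subst vec_eq_iff, intro allI)
        fix k l
        have ak: "complex_of_real (Re (f$k$l)) = (\<Sum>v\<in>B. complex_of_real (a v) * v$k$l)"
          using arg_cong[OF a, of "\<lambda>x. x$k$l"] by (simp add: scaleR_conv_of_real[where 'a=complex])
        have ck: "complex_of_real (Im (f$k$l)) = (\<Sum>v\<in>B. complex_of_real (c v) * v$k$l)"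
          using arg_cong[OF c, of "\<lambda>x. x$k$l"] by (simp add: scaleR_conv_of_real[where 'a=complex])
        have "f$k$l = complex_of_real (Re (f$k$l)) + \<i> * complex_of_real (Im (f$k$l))"
          by (simp add: complex_eq_iff)
        also have "\<dots> = (\<Sum>v\<in>B. (complex_of_real (a v) + \<i> * complex_of_real (c v)) * v$k$l)"
          unfolding ak ck by (simp add: sum.distrib sum_distrib_left algebra_simps)
        finally show "f$k$l = (\<Sum>v\<in>B. cscale (complex_of_real (a v) + \<i> * complex_of_real (c v)) v)$k$l"
          by (simp add: cscale_def)
      qed
      show "f \<in> cv.span B" unfolding cv.span_finite[OF finB]
        by (rule range_eqI[of _ _ "\<lambda>v. complex_of_real (a v) + \<i> * complex_of_real (c v)"]) (simp only: feq)
    qed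
    show "cv.independent B"
    proof
      assume "cv.dependent B"
      then obtain w where w: "\<exists>v\<in>B. w v \<noteq> 0" "(\<Sum>v\<in>B. cscale (w v) v) = 0"
        unfolding cv.dependent_finite[OF finB] by blast
      have nd: "\<forall>v\<in>B. r v = 0" if "(\<Sum>v\<in>B. r v *\<^sub>R v) = 0" for r
      proof (rule ccontr)
        assume "\<not> (\<forall>v\<in>B. r v = 0)"
        then have "\<exists>v\<in>B. r v \<noteq> 0" by blast
        with that have "dependent B" unfolding dependent_finite[OF finB] by blast
        with B(2) show False by contradiction
      qed
      have "\<forall>v\<in>B. Re (w v) = 0" by (rule nd[OF real_comb_zero(1)[OF R w(2)]])
      moreover have "\<forall>v\<in>B. Im (w v) = 0" by (rule nd[OF real_comb_zero(2)[OF R w(2)]])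
      ultimately show False using w(1) by (auto simp: complex_eq_iff)
    qed
  qed
  then show ?thesis unfolding cdim_def E_eq[OF U nz] ER_def[symmetric] using B(4) by simp
qed

theorem theorem5p1:
  fixes u :: "complex ^ 'l ^ 'k"
  assumes "CARD('k) = CARD('l)"
    and "u \<in> U0"
  shows "dim {X \<in> tangent_U u. frechet_derivative mu (at u) X = 0} = mult_one u"
proof -
  have U: "unitary_mat u" and nz: "\<forall>k l. u$k$l \<noteq> 0" using assms(2) by (auto simp: U0_def)
  show ?thesis unfolding mult_one_def dim_Ker[OF nz] cdim_E[OF U nz] ..
qed

end
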